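(* Let $D\in\mathcal{O}_d$ be a discriminant and let $\epsilon_D=\frac12(t_0+u_0\sqrt{D})$ be a fundamental solution of $t^2-u^2D=4$. For $n\ge 0$ write $\epsilon_D^{\,n+1}=\frac12(t_n+u_n\sqrt{D})$ with $t_n,u_n\in\mathcal{O}_d$. Then for every $n\ge 0$, $$|t_n|^2-3<|\epsilon_D|^{2(n+1)}<|t_n|^2+3.$$
   Context: Let $d>0$ be a square-free rational integer, $k_d=\mathbb{Q}(\sqrt{-d})$, and $\mathcal{O}_d$ its ring of integers. An element $D\in\mathcal{O}_d$ is a discriminant if $D$ is not a perfect square in $\mathcal{O}_d$ and $D\equiv x^2 \pmod{4\mathcal{O}_d}$ for some $x\in\mathcal{O}_d$. The square root $\sqrt{D}$ is chosen with argument in $[0,\pi)$. For a solution $(t,u)\in\mathcal{O}_d^2$ of $t^2-u^2D=4$ set $\epsilon_{t,u}=\frac12(t+u\sqrt{D})$. A solution $(t_0,u_0)$ is fundamental if $|\epsilon_{t_0,u_0}|$ is the smallest value larger than $1$ among all $|\epsilon_{t,u}|$ for solutions $(t,u)$; then one writes $\epsilon_D=\epsilon_{t_0,u_0}$. *)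

theory Defs
  imports "HOL-Analysis.Analysis" "HOL-Computational_Algebra.Squarefree"
begin

text \<open>The ring of integers of k_d = Q(sqrt(-d)), d > 0 squarefree, embedded in the complex
numbers via sqrt(-d) = i * sqrt d: it is Z[omega] with omega = sqrt(-d) if d is not
congruent to 3 mod 4, and omega = (1 + sqrt(-d))/2 if d is congruent to 3 mod 4.\<close>

definition omega_d :: "int \<Rightarrow> complex" where
  "omega_d d = (if d mod 4 = 3 then (1 + \<i> * complex_of_real (sqrt (real_of_int d))) / 2
                else \<i> * complex_of_real (sqrt (real_of_int d)))"

definition ring_of_integers :: "int \<Rightarrow> complex set" where
  "ring_of_integers d = {of_int a + of_int b * omega_d d | a b. True}"

definition is_discriminant :: "int \<Rightarrow> complex \<Rightarrow> bool" where
  "is_discriminant d D \<longleftrightarrow> D \<in> ring_of_integers d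
     \<and> \<not> (\<exists>y \<in> ring_of_integers d. D = y ^ 2)
     \<and> (\<exists>x \<in> ring_of_integers d. (D - x ^ 2) / 4 \<in> ring_of_integers d)"

definition sqrt_disc :: "complex \<Rightarrow> complex" where
  "sqrt_disc D = (THE w. w ^ 2 = D \<and> 0 \<le> Arg w \<and> Arg w < pi)"

definition pell_solution :: "int \<Rightarrow> complex \<Rightarrow> complex \<Rightarrow> complex \<Rightarrow> bool" where
  "pell_solution d D t u \<longleftrightarrow> t \<in> ring_of_integers d \<and> u \<in> ring_of_integers d
     \<and> t ^ 2 - u ^ 2 * D = 4"

definition eps :: "complex \<Rightarrow> complex \<Rightarrow> complex \<Rightarrow> complex" where
  "eps D t u = (t + u * sqrt_disc D) / 2"

definition fundamental_solution :: "int \<Rightarrow> complex \<Rightarrow> complex \<Rightarrow> complex \<Rightarrow> bool" where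
  "fundamental_solution d D t0 u0 \<longleftrightarrow> pell_solution d D t0 u0 \<and> cmod (eps D t0 u0) > 1
     \<and> (\<forall>t u. pell_solution d D t u \<and> cmod (eps D t u) > 1
               \<longrightarrow> cmod (eps D t0 u0) \<le> cmod (eps D t u))"

end

theory Submission imports Defs begin

lemma Arg_range_iff: "(0 \<le> Arg z \<and> Arg z < pi) \<longleftrightarrow> (Im z > 0 \<or> (Im z = 0 \<and> Re z \<ge> 0))"
proof -
  have "Arg z \<le> pi" by (rule Arg_le_pi)
  then have "Arg z < pi \<longleftrightarrow> \<not>(Re z < 0 \<and> Im z = 0)" using Arg_eq_pi[of z] by auto
  then show ?thesis using Arg_less_0[of z] by auto
qed

lemma sqrt_disc_sq:
  assumes "D \<noteq> 0" shows "sqrt_disc D ^ 2 = D"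
proof -
  let ?P = "\<lambda>w. w ^ 2 = D \<and> 0 \<le> Arg w \<and> Arg w < pi"
  have ex: "\<exists>w. ?P w"
  proof -
    obtain c where c: "c ^ 2 = D" using power2_csqrt by blast
    show ?thesis
    proof (cases "Im c > 0 \<or> (Im c = 0 \<and> Re c \<ge> 0)")
      case True then show ?thesis using c by (intro exI[of _ c]) (simp add: Arg_range_iff)
    next
      case False then show ?thesis using c by (intro exI[of _ "- c"]) (auto simp: Arg_range_iff)
    qed
  qed
  have un: "w = w'" if "?P w" "?P w'" for w w'
  proof -
    from that have "w ^ 2 = w' ^ 2" by simp
    then have "w' = w \<or> w' = -w" by (auto simp add: power2_eq_iff)
    moreover have "w \<noteq> 0" using that assms by auto
    ultimately show ?thesis using that by (auto simp: Arg_range_iff complex_eq_iff)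
  qed
  have "?P (sqrt_disc D)" unfolding sqrt_disc_def
  proof (rule theI')
    show "\<exists>!w. ?P w" using ex un by blast
  qed
  then show ?thesis by simp
qed

lemma rat_sq_int:
  fixes q :: real and d :: int
  assumes "d > 0" "squarefree d" "q \<in> \<rat>" "of_int d * q ^ 2 \<in> \<int>"
  shows "q \<in> \<int>"
proof -
  obtain a b :: int where ab: "b > 0" "coprime a b" "q = of_int a / of_int b" using Rats_cases'[OF assms(3)] by blast
  obtain k :: int where k: "of_int d * q ^ 2 = of_int k" using assms(4) Ints_cases by metis
  have "real_of_int (d * a ^ 2) = of_int (k * b ^ 2)" using k ab(1) unfolding ab(3) by (simp add: field_simps)
  then have eq: "d * a ^ 2 = k * b ^ 2" by linarith
  have "b ^ 2 dvd d * a ^ 2" unfolding eq by simp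
  moreover have "coprime (b^2) (a^2)" using ab(2) by (simp add: coprime_commute)
  ultimately have "b ^ 2 dvd d" using coprime_dvd_mult_left_iff by blast
  then have "b dvd 1" using assms(2) unfolding squarefree_def by blast
  then have "b = 1" using ab(1) by simp
  then show ?thesis using ab(3) by simp
qed


definition inK :: "int \<Rightarrow> complex \<Rightarrow> bool" where
  "inK d z \<longleftrightarrow> Re z \<in> \<rat> \<and> Im z / sqrt (real_of_int d) \<in> \<rat>"

lemma inK_ring:
  assumes "d > 0" "z \<in> ring_of_integers d" shows "inK d z"
proof -
  have r: "sqrt (real_of_int d) > 0" using assms by simp
  obtain a b :: int where z: "z = of_int a + of_int b * omega_d d" using assms unfolding ring_of_integers_def by blast
  show ?thesis
  proof (cases "d mod 4 = 3")
    case True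
    then show ?thesis using r unfolding z inK_def omega_d_def by simp
  next
    case False
    then show ?thesis using r unfolding z inK_def omega_d_def by simp
  qed
qed

lemma inK_add: "inK d z \<Longrightarrow> inK d w \<Longrightarrow> inK d (z + w)"
  unfolding inK_def by (simp add: add_divide_distrib)

lemma inK_diff: "inK d z \<Longrightarrow> inK d w \<Longrightarrow> inK d (z - w)"
  unfolding inK_def by (simp add: diff_divide_distrib)

lemma inK_half: assumes "inK d z" shows "inK d (z / 2)"
proof -
  have "Im (z/2) / sqrt (real_of_int d) = (Im z / sqrt (real_of_int d)) / 2" by simp
  moreover have "Re (z/2) = Re z / 2" by simp
  ultimately show ?thesis using assms unfolding inK_def by (metis Rats_divide Rats_number_of)
qed

lemma inK_mult:
  assumes "d > 0" "inK d z" "inK d w" shows "inK d (z * w)"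
proof -
  let ?r = "sqrt (real_of_int d)"
  have r: "?r > 0" "?r * ?r = of_int d" using assms by auto
  have "Re (z * w) = Re z * Re w - of_int d * (Im z / ?r) * (Im w / ?r)"
    using r by (simp add: field_simps)
  moreover have "Im (z * w) / ?r = Re z * (Im w / ?r) + (Im z / ?r) * Re w"
    using r by (simp add: field_simps)
  ultimately show ?thesis using assms unfolding inK_def
    by (simp only:) (intro conjI Rats_add Rats_diff Rats_mult Rats_of_int; simp)
qed

lemma inK_inverse:
  assumes "d > 0" "inK d z" shows "inK d (inverse z)"
proof -
  let ?r = "sqrt (real_of_int d)"
  have r: "?r > 0" "?r * ?r = of_int d" using assms by auto
  have n: "(Re z)^2 + (Im z)^2 = (Re z)^2 + of_int d * (Im z / ?r)^2"
    using r by (simp add: field_simps power2_eq_square)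
  have q: "(Re z)^2 + of_int d * (Im z / ?r)^2 \<in> \<rat>" using assms unfolding inK_def by simp
  have "Re (inverse z) = Re z / ((Re z)^2 + of_int d * (Im z / ?r)^2)"
    using n by (simp add: inverse_complex.sel power2_eq_square)
  moreover have "Im (inverse z) / ?r = - (Im z / ?r) / ((Re z)^2 + of_int d * (Im z / ?r)^2)"
    using n by (simp add: inverse_complex.sel power2_eq_square)
  ultimately show ?thesis using assms q unfolding inK_def
    by (simp only:) (intro conjI Rats_divide; simp; simp)
qed


lemma squarefree_int_1: "squarefree (1::int)" by simp

lemma not_inK:
  assumes d: "d > 0" "squarefree d" and DO: "D \<in> ring_of_integers d"
    and nsq: "\<not> (\<exists>y \<in> ring_of_integers d. D = y ^ 2)" and s: "s ^ 2 = D"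
  shows "\<not> inK d s"
proof
  assume K: "inK d s"
  let ?r = "sqrt (real_of_int d)"
  have r: "?r > 0" "?r * ?r = of_int d" "?r ^ 2 = of_int d" using d by auto
  define p where "p = Re s"
  define q where "q = Im s / ?r"
  have pq: "p \<in> \<rat>" "q \<in> \<rat>" using K unfolding inK_def p_def q_def by auto
  have Ims: "Im s = q * ?r" unfolding q_def using r by simp
  have ReD: "Re D = p^2 - of_int d * q^2" using s[symmetric] Ims r unfolding p_def
    by (simp add: power2_eq_square algebra_simps)
  have ImD: "Im D = 2 * p * q * ?r" using s[symmetric] Ims unfolding p_def
    by (simp add: power2_eq_square algebra_simps)
  obtain a b :: int where Dab: "D = of_int a + of_int b * omega_d d" using DO unfolding ring_of_integers_def by blast
  have d2: "2 * (p^2 - of_int d * q^2) \<in> \<int> \<and> 4 * p * q \<in> \<int>"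
  proof (cases "d mod 4 = 3")
    case True
    then have "Re D = a + b / 2" "Im D = b * ?r / 2" unfolding Dab omega_d_def by simp_all
    then have "2 * (p^2 - of_int d * q^2) = of_int (2 * a + b)" "4 * p * q = of_int b"
      using ReD ImD r by (simp_all add: field_simps)
    then show ?thesis by (metis Ints_of_int)
  next
    case False
    then have "Re D = a" "Im D = b * ?r" unfolding Dab omega_d_def by simp_all
    then have "2 * (p^2 - of_int d * q^2) = of_int (2 * a)" "4 * p * q = of_int (2 * b)"
      using ReD ImD r by (simp_all add: field_simps)
    then show ?thesis by (metis Ints_of_int)
  qed
  then obtain m n :: int where mn: "2 * (p^2 - of_int d * q^2) = of_int m" "4 * p * q = of_int n"
    by (metis Ints_cases)
  define N where "N = 2 * (p^2 + of_int d * q^2)"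
  have N2: "N ^ 2 = of_int (m^2 + d * n^2)"
  proof -
    have "N ^ 2 = (2 * (p^2 - of_int d * q^2))^2 + of_int d * (4 * p * q)^2"
      unfolding N_def by (simp add: power2_eq_square algebra_simps)
    then show ?thesis unfolding mn by simp
  qed
  have NQ: "N \<in> \<rat>" unfolding N_def using pq by simp
  have NZ: "N \<in> \<int>"
  proof (rule rat_sq_int[of 1])
    show "N \<in> \<rat>" by (rule NQ)
    show "real_of_int 1 * N ^ 2 \<in> \<int>" unfolding N2 by simp
  qed simp_all
  have "2 * p \<in> \<int>"
  proof (rule rat_sq_int[of 1])
    show "2 * p \<in> \<rat>" using pq by simp
    have "real_of_int 1 * (2 * p) ^ 2 = N + of_int m" unfolding N_def mn(1)[symmetric] by (simp add: power2_eq_square algebra_simps)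
    then show "real_of_int 1 * (2 * p) ^ 2 \<in> \<int>" using NZ by simp
  qed simp_all
  then obtain M :: int where M: "2 * p = of_int M" by (metis Ints_cases)
  have "2 * q \<in> \<int>"
  proof (rule rat_sq_int[OF d])
    show "2 * q \<in> \<rat>" using pq by simp
    have "real_of_int d * (2 * q) ^ 2 = N - of_int m" unfolding N_def mn(1)[symmetric] by (simp add: power2_eq_square algebra_simps)
    then show "real_of_int d * (2 * q) ^ 2 \<in> \<int>" using NZ by simp
  qed
  then obtain K :: int where K: "2 * q = of_int K" by (metis Ints_cases)
  have e1: "M^2 - d * K^2 = 2 * m"
  proof -
    have "real_of_int (M^2 - d * K^2) = of_int (2 * m)"
      using mn(1) M[symmetric] K[symmetric] by (simp add: power2_eq_square algebra_simps)
    then show ?thesis by linarith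
  qed
  have e2: "M * K = n"
  proof -
    have "real_of_int (M * K) = of_int n"
      using mn(2) M[symmetric] K[symmetric] by (simp add: algebra_simps)
    then show ?thesis by linarith
  qed
  have sMK: "s = (of_int M + of_int K * \<i> * complex_of_real ?r) / 2"
    using M K Ims unfolding p_def by (simp add: complex_eq_iff field_simps)
  have "s \<in> ring_of_integers d"
  proof (cases "d mod 4 = 3")
    case True
    then have "odd d" by presburger
    have "even (M^2 - d * K^2)" using e1 by simp
    then have "even M = even K" using \<open>odd d\<close> by auto
    then have "even (M - K)" by simp
    then obtain c where c: "M - K = 2 * c" by blast
    have cr: "real_of_int M = 2 * of_int c + of_int K" using c by linarith
    have "s = of_int c + of_int K * omega_d d"
      using True cr unfolding sMK omega_d_def by (simp add: complex_eq_iff field_simps)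
    then show ?thesis unfolding ring_of_integers_def by blast
  next
    case False
    then have Dab': "Re D = a" "Im D = b * ?r" unfolding Dab omega_d_def by simp_all
    have "2 * (p^2 - of_int d * q^2) = of_int (2 * a)" "4 * p * q = of_int (2 * b)"
      using ReD ImD r Dab' by (simp_all add: field_simps)
    then have "m = 2 * a" "n = 2 * b" using mn by simp_all
    then have f1: "M^2 - d * K^2 = 4 * a" and f2: "M * K = 2 * b" using e1 e2 by simp_all
    have evM: "even M"
    proof (rule ccontr)
      assume oM: "odd M"
      have "even (M * K)" using f2 by simp
      then have "even K" using oM by simp
      then have "even (d * K^2)" by simp
      moreover have "odd (M^2)" using oM by simp
      ultimately have "odd (M^2 - d * K^2)" by simp
      then show False unfolding f1 by simp
    qed
    then obtain M' where M': "M = 2 * M'" by blast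
    have evK: "even K"
    proof (rule ccontr)
      assume oK: "odd K"
      have "d * K^2 = 4 * (M'^2 - a)" using f1 unfolding M' by (simp add: algebra_simps power2_eq_square)
      then have "4 dvd d * K^2" by simp
      moreover have "coprime ((2::int)^2) (K^2)" using oK by (simp only: coprime_power_left_iff coprime_power_right_iff coprime_left_2_iff_odd) simp
      moreover have "(4::int) = 2^2" by simp
      ultimately have "4 dvd d" using coprime_dvd_mult_left_iff by metis
      then have "(2::int)^2 dvd d" by simp
      then have "(2::int) dvd 1" using d(2) unfolding squarefree_def by blast
      then show False by simp
    qed
    then obtain K' where K': "K = 2 * K'" by blast
    have "s = of_int M' + of_int K' * omega_d d"
      using False unfolding sMK omega_d_def M' K' by (simp add: complex_eq_iff field_simps)
    then show ?thesis unfolding ring_of_integers_def by blast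
  qed
  then show False using nsq s by blast
qed




lemma final_ineq:
  fixes E w :: complex
  assumes "E * w = 1" "cmod E > 1"
  shows "cmod (E + w) ^ 2 - 3 < cmod E ^ 2 \<and> cmod E ^ 2 < cmod (E + w) ^ 2 + 3"
proof -
  define a where "a = cmod E"
  define b where "b = cmod w"
  define c where "c = cmod (E + w)"
  have ab: "a * b = 1" using assms(1) unfolding a_def b_def by (metis norm_mult norm_one)
  have a1: "a > 1" using assms(2) a_def by simp
  have b0: "b \<ge> 0" unfolding b_def by simp
  have "b = 1 / a" using ab a1 by (simp add: field_simps)
  then have b1: "b < 1" using a1 by simp
  have bb: "b * b \<le> b" using b0 b1 by (simp add: mult_left_le)
  have c0: "c \<ge> 0" unfolding c_def by simp
  have cu: "c \<le> a + b" unfolding a_def b_def c_def by (rule norm_triangle_ineq)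
  have cl: "a - b \<le> c" unfolding a_def b_def c_def by (rule norm_diff_ineq)
  have "c ^ 2 \<le> (a + b) ^ 2" using cu c0 by (rule power_mono)
  also have "(a + b) ^ 2 = a * a + 2 * (a * b) + b * b" by (simp add: power2_eq_square algebra_simps)
  finally have u: "c^2 < a^2 + 3" using ab bb b1 by (simp add: power2_eq_square)
  have "a - b \<ge> 0" using a1 b1 by simp
  then have "(a - b) ^ 2 \<le> c ^ 2" using cl by (intro power_mono)
  moreover have "(a - b) ^ 2 = a * a - 2 * (a * b) + b * b" by (simp add: power2_eq_square algebra_simps)
  ultimately have l0: "a * a - 2 + b * b \<le> c * c" using ab by (simp add: power2_eq_square)
  have bb0: "b * b \<ge> 0" using b0 by simp
  have l: "a^2 - 3 < c^2" unfolding power2_eq_square using l0 bb0 by linarith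
  show ?thesis using u l unfolding a_def c_def by linarith
qed

theorem proposition3p3:
  fixes d :: int and D t0 u0 :: complex
  assumes "d > 0" and "squarefree d"
    and "is_discriminant d D"
    and "fundamental_solution d D t0 u0"
  shows "\<forall>(n::nat) t u. t \<in> ring_of_integers d \<and> u \<in> ring_of_integers d
           \<and> eps D t0 u0 ^ (n + 1) = (t + u * sqrt_disc D) / 2
         \<longrightarrow> cmod t ^ 2 - 3 < cmod (eps D t0 u0) ^ (2 * (n + 1))
           \<and> cmod (eps D t0 u0) ^ (2 * (n + 1)) < cmod t ^ 2 + 3"
proof (intro allI impI)
  fix n :: nat and t u
  assume H: "t \<in> ring_of_integers d \<and> u \<in> ring_of_integers d
           \<and> eps D t0 u0 ^ (n + 1) = (t + u * sqrt_disc D) / 2"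
  define s where "s = sqrt_disc D"
  have DO: "D \<in> ring_of_integers d" and nsq: "\<not> (\<exists>y \<in> ring_of_integers d. D = y ^ 2)"
    using assms(3) unfolding is_discriminant_def by auto
  have zO: "0 \<in> ring_of_integers d" unfolding ring_of_integers_def
    by (rule CollectI, rule exI[of _ 0], rule exI[of _ 0]) simp
  have D0: "D \<noteq> 0" using nsq zO by force
  have s2: "s ^ 2 = D" unfolding s_def by (rule sqrt_disc_sq[OF D0])
  have sK: "\<not> inK d s" by (rule not_inK[OF assms(1,2) DO nsq s2])
  have t0O: "t0 \<in> ring_of_integers d" and u0O: "u0 \<in> ring_of_integers d"
    and pell: "t0 ^ 2 - u0 ^ 2 * D = 4" and e1: "cmod (eps D t0 u0) > 1"
    using assms(4) unfolding fundamental_solution_def pell_solution_def by auto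
  define e where "e = eps D t0 u0"
  define e' where "e' = (t0 - u0 * s) / 2"
  have e_def': "e = (t0 + u0 * s) / 2" unfolding e_def eps_def s_def by simp
  have ee': "e * e' = 1"
  proof -
    have "e * e' = (t0 ^ 2 - u0 ^ 2 * s ^ 2) / 4" unfolding e_def' e'_def
      by (simp add: power2_eq_square field_simps)
    then show ?thesis using pell s2 by simp
  qed
  have t0K: "inK d t0" and u0K: "inK d u0" and DK: "inK d D"
    using inK_ring[OF assms(1)] t0O u0O DO by auto
  have ind: "\<exists>T U. inK d T \<and> inK d U \<and> e ^ (k + 1) = (T + U * s) / 2 \<and> e' ^ (k + 1) = (T - U * s) / 2" for k
  proof (induction k)
    case 0
    show ?case using t0K u0K unfolding e_def' e'_def by auto
  next
    case (Suc k)
    then obtain T U where TU: "inK d T" "inK d U" "e ^ (k + 1) = (T + U * s) / 2" "e' ^ (k + 1) = (T - U * s) / 2"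
      by blast
    define T' where "T' = (T * t0 + U * u0 * D) / 2"
    define U' where "U' = (T * u0 + U * t0) / 2"
    have "inK d T'" unfolding T'_def
      by (intro inK_half inK_add inK_mult assms(1) TU t0K u0K DK)
    moreover have "inK d U'" unfolding U'_def
      by (intro inK_half inK_add inK_mult assms(1) TU t0K u0K DK)
    moreover have "e ^ (Suc k + 1) = (T' + U' * s) / 2"
    proof -
      have "e ^ (Suc k + 1) = e ^ (k + 1) * e" by simp
      also have "\<dots> = (T + U * s) / 2 * ((t0 + u0 * s) / 2)" by (subst TU(3)) (subst e_def', rule refl)
      also have "\<dots> = (T' + U' * s) / 2" unfolding T'_def U'_def s2[symmetric]
        by (simp add: power2_eq_square field_simps)
      finally show ?thesis .
    qed
    moreover have "e' ^ (Suc k + 1) = (T' - U' * s) / 2"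
    proof -
      have "e' ^ (Suc k + 1) = e' ^ (k + 1) * e'" by simp
      also have "\<dots> = (T - U * s) / 2 * ((t0 - u0 * s) / 2)" by (subst TU(4)) (subst e'_def, rule refl)
      also have "\<dots> = (T' - U' * s) / 2" unfolding T'_def U'_def s2[symmetric]
        by (simp add: power2_eq_square field_simps)
      finally show ?thesis .
    qed
    ultimately show ?case by blast
  qed
  obtain T U where TU: "inK d T" "inK d U" "e ^ (n + 1) = (T + U * s) / 2" "e' ^ (n + 1) = (T - U * s) / 2"
    using ind by blast
  have tK: "inK d t" and uK: "inK d u" using H inK_ring[OF assms(1)] by auto
  have lin: "(t - T) + (u - U) * s = 0" using H TU(3) unfolding e_def s_def
    by (simp add: field_simps)
  have uU: "u = U"
  proof (rule ccontr)
    assume "u \<noteq> U"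
    then have "s = (T - t) * inverse (u - U)" using lin by (simp add: field_simps)
    moreover have "inK d ((T - t) * inverse (u - U))"
      by (intro inK_mult inK_inverse inK_diff assms(1) TU tK uK)
    ultimately show False using sK by simp
  qed
  then have tT: "t = T" using lin by simp
  define E where "E = e ^ (n + 1)"
  define w where "w = e' ^ (n + 1)"
  have tEw: "t = E + w" unfolding E_def w_def TU(3) TU(4) tT by (simp add: field_simps)
  have Ew: "E * w = 1" unfolding E_def w_def by (metis ee' power_mult_distrib power_one)
  have E1: "cmod E > 1" unfolding E_def norm_power e_def by (rule one_less_power[OF e1]) simp
  have pw: "cmod e ^ (2 * (n + 1)) = cmod E ^ 2" unfolding E_def norm_power
    by (simp only: power_mult[symmetric] mult.commute)
  show "cmod t ^ 2 - 3 < cmod (eps D t0 u0) ^ (2 * (n + 1))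
           \<and> cmod (eps D t0 u0) ^ (2 * (n + 1)) < cmod t ^ 2 + 3"
    using final_ineq[OF Ew E1] pw unfolding tEw e_def by simp
qed

end
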